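(* Let $N_1,N_2,N_3\ge0$ be integers. The Calderon transformation $C$ maps the extremal points and extremal faces of $\sigma(N_1,N_2,N_3)$ and of $Q(N_1,N_2,N_3)$ onto the extremal points and extremal faces of $\sigma_P(2N_1,2N_2,2N_3)$ and of $Q_P(2N_1,2N_2,2N_3)$, respectively.
   Context: For integers $N_1,N_2,N_3\ge0$, $\sigma(N_1,N_2,N_3)$ is the set of trigonometric polynomials $f(\alpha,\beta,\gamma)=\sum_{|k|\le N_1}\sum_{|\ell|\le N_2}\sum_{|m|\le N_3} q(k,\ell,m)e^{i(k\alpha+\ell\beta+m\gamma)}$ with $f\ge0$ for all real $\alpha,\beta,\gamma$; $Q(N_1,N_2,N_3)$ is the set of $f\in\sigma(N_1,N_2,N_3)$ of the form $\sum_{j=1}^r|F_j|^2$ with $F_j=\sum_{0\le k\le N_1,0\le\ell\le N_2,0\le m\le N_3}q_j(k,\ell,m)e^{i(k\alpha+\ell\beta+m\gamma)}$. $\sigma_P(2N_1,2N_2,2N_3)$ is the set of real polynomials $f(x,y,z)=\sum_{0\le k\le 2N_1}\sum_{0\le\ell\le2N_2}\sum_{0\le m\le 2N_3}a_{k,\ell,m}x^ky^\ell z^m$ that are nonnegative on $\mathbb R^3$; $Q_P(2N_1,2N_2,2N_3)$ is the set of those $f\in\sigma_P(2N_1,2N_2,2N_3)$ that can be written $\sum_{j=1}^r|F_j(x,y,z)|^2$ with polynomials $F_j$. The Calderon transformation is the linear map $(Cf)(x,y,z)=(x^2+1)^{N_1}(y^2+1)^{N_2}(z^2+1)^{N_3}f(\alpha,\beta,\gamma)$,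 where $e^{i\alpha}=\frac{x+i}{x-i}$, $e^{i\beta}=\frac{y+i}{y-i}$, $e^{i\gamma}=\frac{z+i}{z-i}$. An element $f$ of a convex cone $U$ is extremal (an extremal point) if whenever $f=g+h$ with $g,h\in U$, both $g,h$ are nonnegative multiples of $f$. A convex subset $D\subseteq U$ is an extremal face of $U$ if whenever a point of $D$ lies in the relative interior of a segment contained in $U$, the whole segment lies in $D$. *)

theory Defs
  imports "HOL-Analysis.Analysis"
begin

type_synonym fn3 = "real \<times> real \<times> real \<Rightarrow> real"

definition trig_poly :: "nat \<Rightarrow> nat \<Rightarrow> nat \<Rightarrow> fn3 \<Rightarrow> bool" where
  "trig_poly N1 N2 N3 f \<longleftrightarrow>
     (\<exists>q :: int \<times> int \<times> int \<Rightarrow> complex. \<forall>a b c.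
        complex_of_real (f (a, b, c)) =
        (\<Sum>k\<in>{- int N1..int N1}. \<Sum>l\<in>{- int N2..int N2}. \<Sum>m\<in>{- int N3..int N3}.
           q (k, l, m) * exp (\<i> * complex_of_real (of_int k * a + of_int l * b + of_int m * c))))"

definition sigma_trig :: "nat \<Rightarrow> nat \<Rightarrow> nat \<Rightarrow> fn3 set" where
  "sigma_trig N1 N2 N3 = {f. trig_poly N1 N2 N3 f \<and> (\<forall>p. 0 \<le> f p)}"

definition Q_trig :: "nat \<Rightarrow> nat \<Rightarrow> nat \<Rightarrow> fn3 set" where
  "Q_trig N1 N2 N3 = {f \<in> sigma_trig N1 N2 N3.
     \<exists>(r::nat) (qs :: nat \<Rightarrow> nat \<times> nat \<times> nat \<Rightarrow> complex). \<forall>a b c.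
       f (a, b, c) = (\<Sum>j<r. (cmod (\<Sum>k\<le>N1. \<Sum>l\<le>N2. \<Sum>m\<le>N3.
          qs j (k, l, m) * exp (\<i> * complex_of_real (real k * a + real l * b + real m * c))))\<^sup>2)}"

definition real_poly3 :: "nat \<Rightarrow> nat \<Rightarrow> nat \<Rightarrow> fn3 \<Rightarrow> bool" where
  "real_poly3 D1 D2 D3 f \<longleftrightarrow>
     (\<exists>a :: nat \<times> nat \<times> nat \<Rightarrow> real. \<forall>x y z.
        f (x, y, z) = (\<Sum>k\<le>D1. \<Sum>l\<le>D2. \<Sum>m\<le>D3. a (k, l, m) * x ^ k * y ^ l * z ^ m))"

definition sigma_P :: "nat \<Rightarrow> nat \<Rightarrow> nat \<Rightarrow> fn3 set" where
  "sigma_P D1 D2 D3 = {f. real_poly3 D1 D2 D3 f \<and> (\<forall>p. 0 \<le> f p)}"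

definition Q_P :: "nat \<Rightarrow> nat \<Rightarrow> nat \<Rightarrow> fn3 set" where
  "Q_P D1 D2 D3 = {f \<in> sigma_P D1 D2 D3.
     \<exists>(r::nat) (D::nat) (Fs :: nat \<Rightarrow> nat \<times> nat \<times> nat \<Rightarrow> complex). \<forall>x y z.
       f (x, y, z) = (\<Sum>j<r. (cmod (\<Sum>k\<le>D. \<Sum>l\<le>D. \<Sum>m\<le>D.
          Fs j (k, l, m) * complex_of_real x ^ k * complex_of_real y ^ l * complex_of_real z ^ m))\<^sup>2)}"

definition cal_angle :: "real \<Rightarrow> real" where
  "cal_angle x = Arg ((complex_of_real x + \<i>) / (complex_of_real x - \<i>))"

definition calderon :: "nat \<Rightarrow> nat \<Rightarrow> nat \<Rightarrow> fn3 \<Rightarrow> fn3" where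
  "calderon N1 N2 N3 f = (\<lambda>(x, y, z). (x\<^sup>2 + 1) ^ N1 * (y\<^sup>2 + 1) ^ N2 * (z\<^sup>2 + 1) ^ N3 *
      f (cal_angle x, cal_angle y, cal_angle z))"

definition extremal_point :: "fn3 set \<Rightarrow> fn3 \<Rightarrow> bool" where
  "extremal_point U f \<longleftrightarrow> f \<in> U \<and>
     (\<forall>g\<in>U. \<forall>h\<in>U. f = (\<lambda>p. g p + h p) \<longrightarrow>
        (\<exists>c\<ge>0. g = (\<lambda>p. c * f p)) \<and> (\<exists>d\<ge>0. h = (\<lambda>p. d * f p)))"

definition comb3 :: "fn3 \<Rightarrow> fn3 \<Rightarrow> real \<Rightarrow> fn3" where
  "comb3 g h t = (\<lambda>p. (1 - t) * g p + t * h p)"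

definition extremal_face :: "fn3 set \<Rightarrow> fn3 set \<Rightarrow> bool" where
  "extremal_face U D \<longleftrightarrow> D \<subseteq> U \<and>
     (\<forall>g\<in>D. \<forall>h\<in>D. \<forall>t\<in>{0..1}. comb3 g h t \<in> D) \<and>
     (\<forall>g\<in>U. \<forall>h\<in>U. (\<forall>s\<in>{0..1}. comb3 g h s \<in> U) \<longrightarrow>
        (\<forall>t. 0 < t \<and> t < 1 \<and> comb3 g h t \<in> D \<longrightarrow> (\<forall>s\<in>{0..1}. comb3 g h s \<in> D)))"

end

theory Submission
  imports Defs "HOL-Computational_Algebra.Polynomial"
begin

definition wq :: "real \<Rightarrow> complex" where
  "wq x = (complex_of_real x + \<i>) / (complex_of_real x - \<i>)"

lemma xmi_nz: "complex_of_real x - \<i> \<noteq> 0"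
  by (simp add: complex_eq_iff)
lemma xpi_nz: "complex_of_real x + \<i> \<noteq> 0"
proof
  assume "complex_of_real x + \<i> = 0"
  hence "Im (complex_of_real x + \<i>) = Im 0" by simp
  thus False by simp
qed

lemma cmod_xmi: "cmod (complex_of_real x - \<i>) = cmod (complex_of_real x + \<i>)"
  by (simp add: cmod_def)

lemma cmod_xmi2: "(cmod (complex_of_real x - \<i>))\<^sup>2 = x\<^sup>2 + 1"
  by (simp add: cmod_def)

lemma cmod_wq: "cmod (wq x) = 1"
  using xmi_nz[of x] xpi_nz[of x] by (simp add: wq_def norm_divide cmod_xmi)

lemma cis_cal_angle: "cis (cal_angle x) = wq x"
proof -
  have "wq x \<noteq> 0" using cmod_wq[of x] by auto
  then show ?thesis unfolding cal_angle_def wq_def[symmetric]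
    by (simp add: cis_Arg sgn_div_norm cmod_wq)
qed

lemma wq_surj:
  assumes "cis t \<noteq> 1"
  shows "\<exists>x. wq x = cis t"
proof -
  have c: "cos t \<noteq> 1"
  proof
    assume "cos t = 1"
    moreover hence "sin t = 0" using sin_cos_squared_add[of t] by simp
    ultimately have "cis t = 1" by (simp add: complex_eq_iff)
    thus False using assms by simp
  qed
  define x where "x = sin t / (1 - cos t)"
  have h: "1 - cos t \<noteq> 0" using c by simp
  have e1: "x * (1 - cos t) = sin t" using h by (simp add: x_def)
  have "sin t * sin t = (1 + cos t) * (1 - cos t)"
    using sin_cos_squared_add3[of t] by (simp add: algebra_simps)
  hence e2: "x * sin t = 1 + cos t" using h by (simp add: x_def field_simps)
  have "complex_of_real x + \<i> = cis t * (complex_of_real x - \<i>)"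
    using e1 e2 by (simp add: complex_eq_iff algebra_simps)
  hence "wq x = cis t" using xmi_nz[of x] by (simp add: wq_def field_simps)
  thus ?thesis by blast
qed

lemma wq_lim: "(\<lambda>n. wq (real (Suc n))) \<longlonglongrightarrow> 1"
proof -
  have e: "wq (real (Suc n)) = (1 + \<i> * inverse (of_nat (Suc n))) / (1 - \<i> * inverse (of_nat (Suc n)))" for n
  proof -
    define c where "c = (of_nat (Suc n) :: complex)"
    have c0: "c \<noteq> 0" unfolding c_def by (metis of_nat_neq_0)
    have a: "1 + \<i> * inverse c = (c + \<i>) / c" using c0 by (simp add: field_simps)
    have b: "1 - \<i> * inverse c = (c - \<i>) / c" using c0 by (simp add: field_simps)
    have "complex_of_real (real (Suc n)) = c" unfolding c_def by simp
    hence "wq (real (Suc n)) = (c + \<i>) / (c - \<i>)" unfolding wq_def by simp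
    also have "\<dots> = ((c + \<i>) / c) / ((c - \<i>) / c)" using c0 by simp
    finally show ?thesis using a b c_def by simp
  qed
  have l: "(\<lambda>n. inverse (of_nat (Suc n)) :: complex) \<longlonglongrightarrow> 0"
    using LIMSEQ_Suc[OF lim_inverse_n] by simp
  have "(\<lambda>n. (1 + \<i> * inverse (of_nat (Suc n))) / (1 - \<i> * inverse (of_nat (Suc n)))) \<longlonglongrightarrow> (1 + \<i> * 0) / (1 - \<i> * 0)"
    by (intro tendsto_intros l) simp
  hence "(\<lambda>n. (1 + \<i> * inverse (of_nat (Suc n))) / (1 - \<i> * inverse (of_nat (Suc n)))) \<longlonglongrightarrow> (1::complex)" by simp
  thus ?thesis by (simp only: e)
qed

lemma NN_step:
  fixes H :: "complex \<Rightarrow> real"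
  assumes "continuous (at 1) H" and "\<And>x. H (wq x) \<ge> 0"
  shows "H (cis t) \<ge> 0"
proof (cases "cis t = 1")
  case True
  have "(\<lambda>n. H (wq (real (Suc n)))) \<longlonglongrightarrow> H 1"
    using isCont_tendsto_compose[OF assms(1) wq_lim] .
  hence "H 1 \<ge> 0" by (rule LIMSEQ_le_const) (use assms(2) in blast)
  thus ?thesis using True by simp
next
  case False
  then obtain x where "wq x = cis t" using wq_surj by blast
  thus ?thesis using assms(2)[of x] by simp
qed

lemma NN:
  fixes G :: "complex \<Rightarrow> complex \<Rightarrow> complex \<Rightarrow> real"
  assumes c1: "\<And>v w. continuous (at 1) (\<lambda>u. G u v w)"
    and c2: "\<And>u w. continuous (at 1) (\<lambda>v. G u v w)"
    and c3: "\<And>u v. continuous (at 1) (\<lambda>w. G u v w)"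
    and pos: "\<And>x y z. G (wq x) (wq y) (wq z) \<ge> 0"
  shows "G (cis a) (cis b) (cis c) \<ge> 0"
proof -
  have s1: "G (cis a) (wq y) (wq z) \<ge> 0" for a y z
    by (rule NN_step[OF c1]) (rule pos)
  have s2: "G (cis a) (cis b) (wq z) \<ge> 0" for a b z
    by (rule NN_step[OF c2]) (rule s1)
  show ?thesis
    by (rule NN_step[OF c3]) (rule s2)
qed

lemma cal_int:
  fixes N :: nat and k :: int
  assumes "\<bar>k\<bar> \<le> int N"
  shows "complex_of_real ((x\<^sup>2 + 1) ^ N) * (wq x) powi k
     = (complex_of_real x - \<i>) ^ nat (int N - k) * (complex_of_real x + \<i>) ^ nat (int N + k)"
proof -
  define X where "X = complex_of_real x"
  have m: "X - \<i> \<noteq> 0" and p: "X + \<i> \<noteq> 0" using xmi_nz xpi_nz X_def by auto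
  have sq: "complex_of_real ((x\<^sup>2 + 1) ^ N) = (X + \<i>)^N * (X - \<i>)^N"
    by (simp add: X_def power_mult_distrib[symmetric] algebra_simps power2_eq_square)
  have w: "wq x = (X + \<i>) / (X - \<i>)" by (simp add: wq_def X_def)
  show ?thesis
  proof (cases "k \<ge> 0")
    case True
    then obtain j where kj: "k = int j" by (metis nonneg_eq_int)
    have jN: "j \<le> N" using assms kj by simp
    have e1: "nat (int N - k) = N - j" "nat (int N + k) = N + j" using kj jN by auto
    have "(X - \<i>)^N = (X - \<i>)^(N-j) * (X - \<i>)^j" using jN by (simp add: power_add[symmetric])
    thus ?thesis unfolding X_def[symmetric] sq w using m p
      apply (simp only: e1) unfolding kj
      by (simp add: power_int_of_nat power_divide power_add field_simps)
  next
    case False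
    then obtain j where kj: "k = - int j" by (metis nonneg_eq_int neg_0_le_iff_le le_cases minus_minus)
    have jN: "j \<le> N" using assms kj by simp
    have e1: "nat (int N - k) = N + j" "nat (int N + k) = N - j" using kj jN by auto
    have "(X + \<i>)^N = (X + \<i>)^(N-j) * (X + \<i>)^j" using jN by (simp add: power_add[symmetric])
    thus ?thesis unfolding X_def[symmetric] sq w using m p
      apply (simp only: e1) unfolding kj
      by (simp add: power_int_minus power_int_of_nat power_divide power_add field_simps)
  qed
qed

lemma cal_nat:
  fixes N k :: nat
  assumes "k \<le> N"
  shows "(complex_of_real x - \<i>) ^ N * (wq x) ^ k
     = (complex_of_real x - \<i>) ^ (N - k) * (complex_of_real x + \<i>) ^ k"
proof -
  define X where "X = complex_of_real x"
  have m: "X - \<i> \<noteq> 0" using xmi_nz X_def by auto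
  have w: "wq x = (X + \<i>) / (X - \<i>)" by (simp add: wq_def X_def)
  have "(X - \<i>)^N = (X - \<i>)^(N-k) * (X - \<i>)^k" using assms by (simp add: power_add[symmetric])
  thus ?thesis unfolding X_def[symmetric] w using m
    by (simp add: power_divide field_simps)
qed

lemma exp_int3:
  "exp (\<i> * complex_of_real (of_int k * a + of_int l * b + of_int m * c))
   = cis a powi k * cis b powi l * cis c powi m"
  by (simp only: cis_power_int) (simp add: cis_conv_exp distrib_left exp_add mult_ac)

lemma exp_nat3:
  "exp (\<i> * complex_of_real (real k * a + real l * b + real m * c))
   = cis a ^ k * cis b ^ l * cis c ^ m"
  by (simp only: Complex.DeMoivre) (simp add: cis_conv_exp distrib_left exp_add mult_ac)

lemma poly_sum_bound:
  fixes z :: complex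
  assumes "degree p \<le> n"
  shows "poly p z = (\<Sum>i\<le>n. coeff p i * z ^ i)"
  unfolding poly_altdef
  by (rule sum.mono_neutral_left) (use assms in \<open>auto simp: coeff_eq_0\<close>)

definition Pc :: "nat \<Rightarrow> int \<Rightarrow> complex poly" where
  "Pc N k = [:-\<i>, 1:] ^ nat (int N - k) * [:\<i>, 1:] ^ nat (int N + k)"

lemma poly_lin: fixes a z :: complex shows "poly [:a, 1:] z = z + a" by (simp add: add.commute)

lemma poly_Pc: "poly (Pc N k) z = (z - \<i>) ^ nat (int N - k) * (z + \<i>) ^ nat (int N + k)"
  unfolding Pc_def poly_mult poly_power poly_lin by simp

lemma degree_pow2: fixes p q :: "complex poly" shows "degree (p ^ a * q ^ b) \<le> a * degree p + b * degree q"
  using order_trans[OF degree_mult_le add_mono[OF degree_power_le degree_power_le]] by (simp add: mult.commute)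

lemma degree_lin2: "degree [:a, b:] \<le> 1"
  by (metis One_nat_def degree_pCons_le degree_pCons_0 le_SucE less_eq_nat.simps(1) linorder_linear)

lemma degree_Pc: assumes "\<bar>k\<bar> \<le> int N" shows "degree (Pc N k) \<le> 2 * N"
proof -
  have "degree (Pc N k) \<le> nat (int N - k) * 1 + nat (int N + k) * 1"
    unfolding Pc_def by (rule order.trans[OF degree_pow2]) (intro add_mono mult_left_mono degree_lin2; simp)
  thus ?thesis using assms by linarith
qed

definition Pn :: "nat \<Rightarrow> nat \<Rightarrow> complex poly" where
  "Pn N k = [:-\<i>, 1:] ^ (N - k) * [:\<i>, 1:] ^ k"

lemma poly_Pn: "poly (Pn N k) z = (z - \<i>) ^ (N - k) * (z + \<i>) ^ k"
  unfolding Pn_def poly_mult poly_power poly_lin by simp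

lemma degree_Pn: assumes "k \<le> N" shows "degree (Pn N k) \<le> N"
proof -
  have "degree (Pn N k) \<le> (N - k) * 1 + k * 1"
    unfolding Pn_def by (rule order.trans[OF degree_pow2]) (intro add_mono mult_left_mono degree_lin2; simp)
  thus ?thesis using assms by linarith
qed

definition Rp :: "nat \<Rightarrow> nat \<Rightarrow> complex poly" where
  "Rp M n = [:1/2, 1/2:] ^ n * [:-1/(2*\<i>), 1/(2*\<i>):] ^ (M - n)"

lemma degree_Rp: assumes "n \<le> M" shows "degree (Rp M n) \<le> M"
proof -
  have "degree (Rp M n) \<le> n * 1 + (M - n) * 1"
    unfolding Rp_def by (rule order.trans[OF degree_pow2]) (intro add_mono mult_left_mono degree_lin2; simp)
  thus ?thesis using assms by linarith
qed

lemma Rp_expand: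
  fixes Z :: complex
  assumes "Z - \<i> \<noteq> 0" "n \<le> M"
  shows "Z ^ n = (\<Sum>a\<le>M. coeff (Rp M n) a * ((Z + \<i>) ^ a * (Z - \<i>) ^ (M - a)))"
proof -
  define t where "t = (Z + \<i>) / (Z - \<i>)"
  have "(\<Sum>a\<le>M. coeff (Rp M n) a * ((Z + \<i>) ^ a * (Z - \<i>) ^ (M - a)))
      = (\<Sum>a\<le>M. (Z - \<i>) ^ M * (coeff (Rp M n) a * t ^ a))"
  proof (rule sum.cong[OF refl])
    fix a assume "a \<in> {..M}"
    hence "(Z - \<i>) ^ M = (Z - \<i>) ^ (M - a) * (Z - \<i>) ^ a" by (simp add: power_add[symmetric])
    thus "coeff (Rp M n) a * ((Z + \<i>) ^ a * (Z - \<i>) ^ (M - a)) = (Z - \<i>) ^ M * (coeff (Rp M n) a * t ^ a)"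
      using assms(1) by (simp add: t_def power_divide field_simps)
  qed
  also have "\<dots> = (Z - \<i>) ^ M * poly (Rp M n) t"
    by (simp add: sum_distrib_left poly_sum_bound[OF degree_Rp[OF assms(2)]])
  also have "poly (Rp M n) t = ((1/2) + t/2) ^ n * (-1/(2*\<i>) + t/(2*\<i>)) ^ (M - n)"
    by (simp add: Rp_def algebra_simps)
  also have "(Z - \<i>) ^ M = (Z - \<i>) ^ n * (Z - \<i>) ^ (M - n)"
    using assms(2) by (simp add: power_add[symmetric])
  also have "(Z - \<i>) ^ n * (Z - \<i>) ^ (M - n) * (((1/2) + t/2) ^ n * (-1/(2*\<i>) + t/(2*\<i>)) ^ (M - n))
     = ((Z - \<i>) * ((1/2) + t/2)) ^ n * ((Z - \<i>) * (-1/(2*\<i>) + t/(2*\<i>))) ^ (M - n)"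
    by (simp add: power_mult_distrib mult_ac)
  also have "(Z - \<i>) * ((1/2) + t/2) = Z"
  proof -
    have zt: "(Z - \<i>) * t = Z + \<i>" using assms(1) by (simp add: t_def)
    have "(Z - \<i>) * ((1/2) + t/2) = ((Z - \<i>) + (Z - \<i>) * t) / 2" by (simp add: field_simps)
    thus ?thesis by (simp add: zt)
  qed
  also have "(Z - \<i>) * (-1/(2*\<i>) + t/(2*\<i>)) = 1"
  proof -
    have zt: "(Z - \<i>) * t = Z + \<i>" using assms(1) by (simp add: t_def)
    have "(Z - \<i>) * (-1/(2*\<i>) + t/(2*\<i>)) = ((Z - \<i>) * t - (Z - \<i>)) / (2*\<i>)" by (simp add: field_simps)
    thus ?thesis by (simp add: zt)
  qed
  finally show ?thesis by simp
qed

lemma sum3_prod: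
  "(\<Sum>a\<in>A. \<Sum>b\<in>B. \<Sum>c\<in>C. g a b c) = (\<Sum>(a,b,c)\<in>A\<times>B\<times>C. g a b c)"
  by (simp add: sum.cartesian_product)

lemma swap33:
  fixes X :: "_ \<Rightarrow> _ \<Rightarrow> _ \<Rightarrow> _ \<Rightarrow> _ \<Rightarrow> _ \<Rightarrow> 'a::comm_monoid_add"
  shows "(\<Sum>a\<in>A. \<Sum>b\<in>B. \<Sum>c\<in>C. \<Sum>d\<in>D. \<Sum>e\<in>E. \<Sum>f\<in>F. X a b c d e f)
       = (\<Sum>d\<in>D. \<Sum>e\<in>E. \<Sum>f\<in>F. \<Sum>a\<in>A. \<Sum>b\<in>B. \<Sum>c\<in>C. X a b c d e f)"
proof -
  have i: "\<And>a b c. (\<Sum>d\<in>D. \<Sum>e\<in>E. \<Sum>f\<in>F. X a b c d e f) = (\<Sum>(d,e,f)\<in>D\<times>E\<times>F. X a b c d e f)"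
    by (rule sum3_prod)
  have j: "\<And>d e f. (\<Sum>a\<in>A. \<Sum>b\<in>B. \<Sum>c\<in>C. X a b c d e f) = (\<Sum>(a,b,c)\<in>A\<times>B\<times>C. X a b c d e f)"
    by (rule sum3_prod)
  have "(\<Sum>a\<in>A. \<Sum>b\<in>B. \<Sum>c\<in>C. \<Sum>d\<in>D. \<Sum>e\<in>E. \<Sum>f\<in>F. X a b c d e f)
     = (\<Sum>(a,b,c)\<in>A\<times>B\<times>C. \<Sum>(d,e,f)\<in>D\<times>E\<times>F. X a b c d e f)"
    by (simp only: i) (rule sum3_prod)
  also have "\<dots> = (\<Sum>(d,e,f)\<in>D\<times>E\<times>F. \<Sum>(a,b,c)\<in>A\<times>B\<times>C. X a b c d e f)"
    using sum.swap[of "\<lambda>x y. X (fst x) (fst (snd x)) (snd (snd x)) (fst y) (fst (snd y)) (snd (snd y))" "D\<times>E\<times>F" "A\<times>B\<times>C"]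
    by (simp add: split_def)
  also have "\<dots> = (\<Sum>d\<in>D. \<Sum>e\<in>E. \<Sum>f\<in>F. \<Sum>a\<in>A. \<Sum>b\<in>B. \<Sum>c\<in>C. X a b c d e f)"
    by (simp only: j) (rule sum3_prod[symmetric])
  finally show ?thesis .
qed

lemma prod3_sum:
  fixes a :: "_ \<Rightarrow> 'a::comm_semiring_1"
  shows "(\<Sum>i\<in>I. a i) * (\<Sum>j\<in>J. b j) * (\<Sum>h\<in>H. c h) = (\<Sum>i\<in>I. \<Sum>j\<in>J. \<Sum>h\<in>H. a i * b j * c h)"
proof -
  have "(\<Sum>i\<in>I. a i) * (\<Sum>j\<in>J. b j) * (\<Sum>h\<in>H. c h) = (\<Sum>i\<in>I. a i * ((\<Sum>j\<in>J. b j) * (\<Sum>h\<in>H. c h)))"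
    by (simp add: sum_distrib_right mult.assoc)
  also have "\<dots> = (\<Sum>i\<in>I. \<Sum>j\<in>J. a i * (b j * (\<Sum>h\<in>H. c h)))"
    by (subst sum_distrib_right) (simp add: sum_distrib_left)
  also have "\<dots> = (\<Sum>i\<in>I. \<Sum>j\<in>J. \<Sum>h\<in>H. a i * b j * c h)"
    by (simp add: sum_distrib_left mult.assoc)
  finally show ?thesis .
qed

lemma swap6:
  fixes q :: "'k \<times> 'l \<times> 'm \<Rightarrow> 'a::comm_semiring_1"
  shows "(\<Sum>k\<in>K. \<Sum>l\<in>L. \<Sum>m\<in>M. q (k,l,m) * ((\<Sum>i\<in>I. A k i * u i) * (\<Sum>j\<in>J. B l j * v j) * (\<Sum>h\<in>H. C m h * w h)))
   = (\<Sum>i\<in>I. \<Sum>j\<in>J. \<Sum>h\<in>H. (\<Sum>k\<in>K. \<Sum>l\<in>L. \<Sum>m\<in>M. q (k,l,m) * A k i * B l j * C m h) * (u i * v j * w h))"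
proof -
  have "(\<Sum>k\<in>K. \<Sum>l\<in>L. \<Sum>m\<in>M. q (k,l,m) * ((\<Sum>i\<in>I. A k i * u i) * (\<Sum>j\<in>J. B l j * v j) * (\<Sum>h\<in>H. C m h * w h)))
     = (\<Sum>k\<in>K. \<Sum>l\<in>L. \<Sum>m\<in>M. \<Sum>i\<in>I. \<Sum>j\<in>J. \<Sum>h\<in>H. q (k,l,m) * A k i * B l j * C m h * (u i * v j * w h))"
    unfolding prod3_sum by (simp add: sum_distrib_left mult_ac)
  also have "\<dots> = (\<Sum>i\<in>I. \<Sum>j\<in>J. \<Sum>h\<in>H. \<Sum>k\<in>K. \<Sum>l\<in>L. \<Sum>m\<in>M. q (k,l,m) * A k i * B l j * C m h * (u i * v j * w h))"
    by (rule swap33)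
  also have "\<dots> = (\<Sum>i\<in>I. \<Sum>j\<in>J. \<Sum>h\<in>H. (\<Sum>k\<in>K. \<Sum>l\<in>L. \<Sum>m\<in>M. q (k,l,m) * A k i * B l j * C m h) * (u i * v j * w h))"
    by (simp add: sum_distrib_right)
  finally show ?thesis .
qed

lemma sum_sym_int: "(\<Sum>k\<in>{-n..n::int}. g k) = (\<Sum>k\<in>{-n..n}. g (- k))"
  by (rule sum.reindex_bij_witness[of _ uminus uminus]) auto

lemma sum_nat_int:
  "(\<Sum>a\<le>2*N. g a) = (\<Sum>k\<in>{-int N..int N}. g (nat (int N + k)))"
  by (rule sum.reindex_bij_witness[of _ "\<lambda>a. nat (int N + a)" "\<lambda>k. int k - int N"]) auto

definition Gt :: "(int \<times> int \<times> int \<Rightarrow> complex) \<Rightarrow> nat \<Rightarrow> nat \<Rightarrow> nat \<Rightarrow> complex \<Rightarrow> complex \<Rightarrow> complex \<Rightarrow> complex" where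
  "Gt q N1 N2 N3 u v w = (\<Sum>k\<in>{- int N1..int N1}. \<Sum>l\<in>{- int N2..int N2}. \<Sum>m\<in>{- int N3..int N3}.
      q (k, l, m) * (u powi k * v powi l * w powi m))"

definition cont3 :: "(complex \<Rightarrow> complex \<Rightarrow> complex \<Rightarrow> real) \<Rightarrow> bool" where
  "cont3 G \<longleftrightarrow> (\<forall>v w. continuous (at 1) (\<lambda>u. G u v w)) \<and> (\<forall>u w. continuous (at 1) (\<lambda>v. G u v w))
     \<and> (\<forall>u v. continuous (at 1) (\<lambda>w. G u v w))"

lemma cont3_Gt: "cont3 (\<lambda>u v w. Re (Gt q N1 N2 N3 u v w))"
  unfolding cont3_def Gt_def by (intro conjI allI continuous_Re continuous_intros; simp)

lemma NN3: "cont3 G \<Longrightarrow> (\<And>x y z. G (wq x) (wq y) (wq z) \<ge> 0) \<Longrightarrow> G (cis a) (cis b) (cis c) \<ge> 0"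
  unfolding cont3_def by (rule NN) auto

lemma NN3_eq:
  assumes "cont3 G1" "cont3 G2" "\<And>x y z. G1 (wq x) (wq y) (wq z) = G2 (wq x) (wq y) (wq z)"
  shows "G1 (cis a) (cis b) (cis c) = G2 (cis a) (cis b) (cis c)"
proof -
  have c: "cont3 (\<lambda>u v w. G1 u v w - G2 u v w)" "cont3 (\<lambda>u v w. G2 u v w - G1 u v w)"
    using assms(1,2) unfolding cont3_def by (auto intro!: continuous_intros)
  have "G1 (cis a) (cis b) (cis c) - G2 (cis a) (cis b) (cis c) \<ge> 0"
    using NN3[OF c(1)] assms(3) by simp
  moreover have "G2 (cis a) (cis b) (cis c) - G1 (cis a) (cis b) (cis c) \<ge> 0"
    using NN3[OF c(2)] assms(3) by simp
  ultimately show ?thesis by simp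
qed

lemma trig_Gt:
  assumes "trig_poly N1 N2 N3 f"
  obtains q where "\<And>a b c. complex_of_real (f (a, b, c)) = Gt q N1 N2 N3 (cis a) (cis b) (cis c)"
proof -
  obtain q where q: "\<And>a b c. complex_of_real (f (a, b, c)) =
        (\<Sum>k\<in>{- int N1..int N1}. \<Sum>l\<in>{- int N2..int N2}. \<Sum>m\<in>{- int N3..int N3}.
           q (k, l, m) * exp (\<i> * complex_of_real (of_int k * a + of_int l * b + of_int m * c)))"
    using assms unfolding trig_poly_def by blast
  show ?thesis by (rule that[of q]) (simp only: q Gt_def exp_int3)
qed

lemma trig_Gt_real:
  assumes "\<And>a b c. complex_of_real (f (a, b, c)) = Gt q N1 N2 N3 (cis a) (cis b) (cis c)"
  shows "f (a, b, c) = Re (Gt q N1 N2 N3 (cis a) (cis b) (cis c))"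
  using arg_cong[OF assms, of Re] by simp

lemma calderon_apply:
  "calderon N1 N2 N3 f (x, y, z) = (x\<^sup>2 + 1) ^ N1 * (y\<^sup>2 + 1) ^ N2 * (z\<^sup>2 + 1) ^ N3 *
      f (cal_angle x, cal_angle y, cal_angle z)"
  by (simp add: calderon_def)

lemma sq1: "(0::real) < x\<^sup>2 + 1" by (rule add_nonneg_pos) simp_all

lemma cal_int':
  assumes "\<bar>k\<bar> \<le> int N"
  shows "((complex_of_real x)\<^sup>2 + 1) ^ N * (wq x) powi k
     = (complex_of_real x - \<i>) ^ nat (int N - k) * (complex_of_real x + \<i>) ^ nat (int N + k)"
  using cal_int[OF assms, of x] by simp

lemma wpos: "(x\<^sup>2 + 1::real) ^ N1 * (y\<^sup>2 + 1) ^ N2 * (z\<^sup>2 + 1) ^ N3 > 0"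
  by (intro mult_pos_pos zero_less_power sq1)

lemma trig_inj:
  assumes f: "trig_poly N1 N2 N3 f" and g: "trig_poly N1 N2 N3 g"
    and e: "calderon N1 N2 N3 f = calderon N1 N2 N3 g"
  shows "f = g"
proof -
  obtain qf where qf: "\<And>a b c. complex_of_real (f (a, b, c)) = Gt qf N1 N2 N3 (cis a) (cis b) (cis c)"
    using trig_Gt[OF f] by blast
  obtain qg where qg: "\<And>a b c. complex_of_real (g (a, b, c)) = Gt qg N1 N2 N3 (cis a) (cis b) (cis c)"
    using trig_Gt[OF g] by blast
  have "Re (Gt qf N1 N2 N3 (wq x) (wq y) (wq z)) = Re (Gt qg N1 N2 N3 (wq x) (wq y) (wq z))" for x y z
  proof -
    have "calderon N1 N2 N3 f (x,y,z) = calderon N1 N2 N3 g (x,y,z)" using e by simp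
    moreover have "(x\<^sup>2 + 1::real) ^ N1 * (y\<^sup>2 + 1) ^ N2 * (z\<^sup>2 + 1) ^ N3 \<noteq> 0"
      using wpos[of x N1 y N2 z N3] by linarith
    ultimately have "f (cal_angle x, cal_angle y, cal_angle z) = g (cal_angle x, cal_angle y, cal_angle z)"
      unfolding calderon_apply using sq1[of x] sq1[of y] sq1[of z] by simp
    thus ?thesis using trig_Gt_real[OF qf] trig_Gt_real[OF qg] by (simp add: cis_cal_angle)
  qed
  hence "Re (Gt qf N1 N2 N3 (cis a) (cis b) (cis c)) = Re (Gt qg N1 N2 N3 (cis a) (cis b) (cis c))" for a b c
    by (intro NN3_eq[of "\<lambda>u v w. Re (Gt qf N1 N2 N3 u v w)" "\<lambda>u v w. Re (Gt qg N1 N2 N3 u v w)", simplified] cont3_Gt)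
  thus ?thesis using trig_Gt_real[OF qf] trig_Gt_real[OF qg] by (auto simp: fun_eq_iff)
qed

lemma cal_Gt:
  assumes "\<And>a b c. complex_of_real (f (a, b, c)) = Gt q N1 N2 N3 (cis a) (cis b) (cis c)"
  shows "complex_of_real (calderon N1 N2 N3 f (x, y, z)) =
    (\<Sum>i\<le>2*N1. \<Sum>j\<le>2*N2. \<Sum>h\<le>2*N3.
      (\<Sum>k\<in>{- int N1..int N1}. \<Sum>l\<in>{- int N2..int N2}. \<Sum>m\<in>{- int N3..int N3}.
         q (k, l, m) * coeff (Pc N1 k) i * coeff (Pc N2 l) j * coeff (Pc N3 m) h)
      * (complex_of_real x ^ i * complex_of_real y ^ j * complex_of_real z ^ h))"
proof -
  have "complex_of_real (calderon N1 N2 N3 f (x, y, z)) =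
     complex_of_real ((x\<^sup>2 + 1) ^ N1) * complex_of_real ((y\<^sup>2 + 1) ^ N2) * complex_of_real ((z\<^sup>2 + 1) ^ N3)
      * Gt q N1 N2 N3 (wq x) (wq y) (wq z)"
    unfolding calderon_apply by (simp add: assms cis_cal_angle)
  also have "\<dots> = (\<Sum>k\<in>{- int N1..int N1}. \<Sum>l\<in>{- int N2..int N2}. \<Sum>m\<in>{- int N3..int N3}.
      q (k, l, m) * ((complex_of_real ((x\<^sup>2 + 1) ^ N1) * wq x powi k) *
        (complex_of_real ((y\<^sup>2 + 1) ^ N2) * wq y powi l) * (complex_of_real ((z\<^sup>2 + 1) ^ N3) * wq z powi m)))"
    unfolding Gt_def by (simp add: sum_distrib_left mult_ac)
  also have "\<dots> = (\<Sum>k\<in>{- int N1..int N1}. \<Sum>l\<in>{- int N2..int N2}. \<Sum>m\<in>{- int N3..int N3}.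
      q (k, l, m) * ((\<Sum>i\<le>2*N1. coeff (Pc N1 k) i * complex_of_real x ^ i) *
        (\<Sum>j\<le>2*N2. coeff (Pc N2 l) j * complex_of_real y ^ j) * (\<Sum>h\<le>2*N3. coeff (Pc N3 m) h * complex_of_real z ^ h)))"
    by (intro sum.cong refl arg_cong2[where f="(*)"])
       (auto simp: cal_int' poly_sum_bound[OF degree_Pc, symmetric] poly_Pc abs_le_iff)
  also have "\<dots> = (\<Sum>i\<le>2*N1. \<Sum>j\<le>2*N2. \<Sum>h\<le>2*N3.
      (\<Sum>k\<in>{- int N1..int N1}. \<Sum>l\<in>{- int N2..int N2}. \<Sum>m\<in>{- int N3..int N3}.
         q (k, l, m) * coeff (Pc N1 k) i * coeff (Pc N2 l) j * coeff (Pc N3 m) h)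
      * (complex_of_real x ^ i * complex_of_real y ^ j * complex_of_real z ^ h))"
    by (rule swap6)
  finally show ?thesis .
qed

lemma Gt_trig:
  assumes "\<And>a b c. complex_of_real (f (a, b, c)) = Gt q N1 N2 N3 (cis a) (cis b) (cis c)"
  shows "trig_poly N1 N2 N3 f"
  unfolding trig_poly_def
  by (rule exI[of _ q]) (simp only: assms Gt_def exp_int3, blast)

lemma Gt_lin:
  "Gt (\<lambda>p. s * q p + t * q' p) N1 N2 N3 u v w = s * Gt q N1 N2 N3 u v w + t * Gt q' N1 N2 N3 u v w"
  unfolding Gt_def by (simp add: sum.distrib sum_distrib_left algebra_simps)

lemma trig_lin:
  assumes f: "trig_poly N1 N2 N3 f" and g: "trig_poly N1 N2 N3 g"
  shows "trig_poly N1 N2 N3 (\<lambda>p. s * f p + t * g p)"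
proof -
  obtain qf where qf: "\<And>a b c. complex_of_real (f (a, b, c)) = Gt qf N1 N2 N3 (cis a) (cis b) (cis c)"
    using trig_Gt[OF f] by blast
  obtain qg where qg: "\<And>a b c. complex_of_real (g (a, b, c)) = Gt qg N1 N2 N3 (cis a) (cis b) (cis c)"
    using trig_Gt[OF g] by blast
  show ?thesis
    by (rule Gt_trig[where q="\<lambda>p. complex_of_real s * qf p + complex_of_real t * qg p"])
       (simp add: Gt_lin qf[symmetric] qg[symmetric])
qed

lemma sum3_sym:
  "(\<Sum>k\<in>{-n1..n1::int}. \<Sum>l\<in>{-n2..n2::int}. \<Sum>m\<in>{-n3..n3::int}. g k l m)
   = (\<Sum>k\<in>{-n1..n1}. \<Sum>l\<in>{-n2..n2}. \<Sum>m\<in>{-n3..n3}. g (-k) (-l) (-m))"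
proof -
  have i: "\<And>k l. (\<Sum>m\<in>{-n3..n3}. g k l m) = (\<Sum>m\<in>{-n3..n3}. g k l (-m))" by (rule sum_sym_int)
  have j: "\<And>k. (\<Sum>l\<in>{-n2..n2}. \<Sum>m\<in>{-n3..n3}. g k l (-m)) = (\<Sum>l\<in>{-n2..n2}. \<Sum>m\<in>{-n3..n3}. g k (-l) (-m))"
    by (rule sum_sym_int)
  show ?thesis
    by (simp only: i j) (rule sum_sym_int)
qed

lemma cnj_cis_powi: "cnj (cis a powi k) = cis a powi (-k)"
  by (simp add: cis_power_int cis_cnj)

lemma Gt_cnj:
  "cnj (Gt q N1 N2 N3 (cis a) (cis b) (cis c)) = Gt (\<lambda>(k,l,m). cnj (q (-k,-l,-m))) N1 N2 N3 (cis a) (cis b) (cis c)"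
  unfolding Gt_def cnj_sum
  by (subst sum3_sym) (simp only: cnj_cis_powi complex_cnj_mult minus_minus prod.case)

lemma trig_Re: "trig_poly N1 N2 N3 (\<lambda>(a,b,c). Re (Gt q N1 N2 N3 (cis a) (cis b) (cis c)))"
proof (rule Gt_trig[where q="\<lambda>p. (1/2) * q p + (1/2) * (\<lambda>(k,l,m). cnj (q (-k,-l,-m))) p"])
  fix a b c
  have "complex_of_real (Re (Gt q N1 N2 N3 (cis a) (cis b) (cis c)))
     = (1/2) * Gt q N1 N2 N3 (cis a) (cis b) (cis c) + (1/2) * cnj (Gt q N1 N2 N3 (cis a) (cis b) (cis c))"
    using complex_add_cnj[of "Gt q N1 N2 N3 (cis a) (cis b) (cis c)"] by (simp add: field_simps)
  thus "complex_of_real ((\<lambda>(a,b,c). Re (Gt q N1 N2 N3 (cis a) (cis b) (cis c))) (a, b, c)) =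
     Gt (\<lambda>p. (1/2) * q p + (1/2) * (\<lambda>(k,l,m). cnj (q (-k,-l,-m))) p) N1 N2 N3 (cis a) (cis b) (cis c)"
    by (simp only: Gt_lin Gt_cnj prod.case)
qed

lemma W_Gt:
  "complex_of_real ((x\<^sup>2 + 1) ^ N1 * (y\<^sup>2 + 1) ^ N2 * (z\<^sup>2 + 1) ^ N3) * Gt q N1 N2 N3 (wq x) (wq y) (wq z)
   = (\<Sum>k\<in>{- int N1..int N1}. \<Sum>l\<in>{- int N2..int N2}. \<Sum>m\<in>{- int N3..int N3}.
      q (k, l, m) * (poly (Pc N1 k) (complex_of_real x) * poly (Pc N2 l) (complex_of_real y) * poly (Pc N3 m) (complex_of_real z)))"
proof -
  have "complex_of_real ((x\<^sup>2 + 1) ^ N1 * (y\<^sup>2 + 1) ^ N2 * (z\<^sup>2 + 1) ^ N3) * Gt q N1 N2 N3 (wq x) (wq y) (wq z)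
     = (\<Sum>k\<in>{- int N1..int N1}. \<Sum>l\<in>{- int N2..int N2}. \<Sum>m\<in>{- int N3..int N3}.
      q (k, l, m) * ((complex_of_real ((x\<^sup>2 + 1) ^ N1) * wq x powi k) *
        (complex_of_real ((y\<^sup>2 + 1) ^ N2) * wq y powi l) * (complex_of_real ((z\<^sup>2 + 1) ^ N3) * wq z powi m)))"
    unfolding Gt_def by (simp add: sum_distrib_left mult_ac)
  also have "\<dots> = (\<Sum>k\<in>{- int N1..int N1}. \<Sum>l\<in>{- int N2..int N2}. \<Sum>m\<in>{- int N3..int N3}.
      q (k, l, m) * (poly (Pc N1 k) (complex_of_real x) * poly (Pc N2 l) (complex_of_real y) * poly (Pc N3 m) (complex_of_real z)))"
    by (intro sum.cong refl arg_cong2[where f="(*)"])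
       (auto simp: cal_int' poly_Pc abs_le_iff)
  finally show ?thesis .
qed

lemma sigma_fwd:
  assumes "f \<in> sigma_trig N1 N2 N3"
  shows "calderon N1 N2 N3 f \<in> sigma_P (2*N1) (2*N2) (2*N3)"
proof -
  have tp: "trig_poly N1 N2 N3 f" and nn: "\<And>p. f p \<ge> 0" using assms by (auto simp: sigma_trig_def)
  obtain q where q: "\<And>a b c. complex_of_real (f (a, b, c)) = Gt q N1 N2 N3 (cis a) (cis b) (cis c)"
    using trig_Gt[OF tp] by blast
  define cc where "cc = (\<lambda>(i,j,h). (\<Sum>k\<in>{- int N1..int N1}. \<Sum>l\<in>{- int N2..int N2}. \<Sum>m\<in>{- int N3..int N3}.
         q (k, l, m) * coeff (Pc N1 k) i * coeff (Pc N2 l) j * coeff (Pc N3 m) h))"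
  have "real_poly3 (2*N1) (2*N2) (2*N3) (calderon N1 N2 N3 f)"
    unfolding real_poly3_def
  proof (intro exI[of _ "\<lambda>p. Re (cc p)"] allI)
    fix x y z
    have "calderon N1 N2 N3 f (x, y, z) = Re (complex_of_real (calderon N1 N2 N3 f (x, y, z)))" by simp
    also have "\<dots> = Re (\<Sum>i\<le>2*N1. \<Sum>j\<le>2*N2. \<Sum>h\<le>2*N3. cc (i,j,h) * complex_of_real (x ^ i * y ^ j * z ^ h))"
      unfolding cal_Gt[OF q] cc_def by simp
    also have "\<dots> = (\<Sum>i\<le>2*N1. \<Sum>j\<le>2*N2. \<Sum>h\<le>2*N3. Re (cc (i,j,h)) * x ^ i * y ^ j * z ^ h)"
      by (simp add: mult.assoc)
    finally show "calderon N1 N2 N3 f (x, y, z) = (\<Sum>i\<le>2*N1. \<Sum>j\<le>2*N2. \<Sum>h\<le>2*N3. Re (cc (i,j,h)) * x ^ i * y ^ j * z ^ h)" .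
  qed
  moreover have "calderon N1 N2 N3 f p \<ge> 0" for p
  proof -
    obtain x y z where "p = (x, y, z)" by (cases p) auto
    thus ?thesis using nn wpos[of x N1 y N2 z N3] by (simp add: calderon_apply)
  qed
  ultimately show ?thesis by (simp add: sigma_P_def)
qed

lemma Xpow:
  assumes "i \<le> 2 * N"
  shows "complex_of_real x ^ i = (\<Sum>k\<in>{- int N..int N}. coeff (Rp (2*N) i) (nat (int N + k)) * poly (Pc N k) (complex_of_real x))"
proof -
  have "complex_of_real x ^ i = (\<Sum>a\<le>2*N. coeff (Rp (2*N) i) a * ((complex_of_real x + \<i>) ^ a * (complex_of_real x - \<i>) ^ (2*N - a)))"
    by (rule Rp_expand[OF xmi_nz assms])
  also have "\<dots> = (\<Sum>k\<in>{- int N..int N}. coeff (Rp (2*N) i) (nat (int N + k)) * ((complex_of_real x + \<i>) ^ nat (int N + k) * (complex_of_real x - \<i>) ^ (2*N - nat (int N + k))))"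
    by (rule sum_nat_int)
  also have "\<dots> = (\<Sum>k\<in>{- int N..int N}. coeff (Rp (2*N) i) (nat (int N + k)) * poly (Pc N k) (complex_of_real x))"
  proof (rule sum.cong[OF refl])
    fix k assume "k \<in> {- int N..int N}"
    hence "2*N - nat (int N + k) = nat (int N - k)" by auto
    thus "coeff (Rp (2*N) i) (nat (int N + k)) * ((complex_of_real x + \<i>) ^ nat (int N + k) * (complex_of_real x - \<i>) ^ (2*N - nat (int N + k)))
       = coeff (Rp (2*N) i) (nat (int N + k)) * poly (Pc N k) (complex_of_real x)"
      by (simp add: poly_Pc mult.commute)
  qed
  finally show ?thesis .
qed

lemma sigma_bwd:
  assumes "p \<in> sigma_P (2*N1) (2*N2) (2*N3)"
  shows "\<exists>f \<in> sigma_trig N1 N2 N3. calderon N1 N2 N3 f = p"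
proof -
  obtain a where a: "\<And>x y z. p (x, y, z) = (\<Sum>i\<le>2*N1. \<Sum>j\<le>2*N2. \<Sum>h\<le>2*N3. a (i, j, h) * x ^ i * y ^ j * z ^ h)"
    using assms unfolding sigma_P_def real_poly3_def by blast
  have pnn: "\<And>q. p q \<ge> 0" using assms unfolding sigma_P_def by blast
  define cc where "cc = (\<lambda>(k,l,m). (\<Sum>i\<le>2*N1. \<Sum>j\<le>2*N2. \<Sum>h\<le>2*N3.
      complex_of_real (a (i,j,h)) * coeff (Rp (2*N1) i) (nat (int N1 + k)) * coeff (Rp (2*N2) j) (nat (int N2 + l))
        * coeff (Rp (2*N3) h) (nat (int N3 + m))))"
  define W where "W = (\<lambda>x y z. (x\<^sup>2 + 1::real) ^ N1 * (y\<^sup>2 + 1) ^ N2 * (z\<^sup>2 + 1) ^ N3)"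
  have key: "W x y z * Re (Gt cc N1 N2 N3 (wq x) (wq y) (wq z)) = p (x, y, z)" for x y z
  proof -
    have "complex_of_real (p (x, y, z)) = (\<Sum>i\<le>2*N1. \<Sum>j\<le>2*N2. \<Sum>h\<le>2*N3. complex_of_real (a (i, j, h)) *
        (complex_of_real x ^ i * complex_of_real y ^ j * complex_of_real z ^ h))"
      by (simp add: a mult.assoc)
    also have "\<dots> = (\<Sum>i\<le>2*N1. \<Sum>j\<le>2*N2. \<Sum>h\<le>2*N3. complex_of_real (a (i, j, h)) *
        ((\<Sum>k\<in>{- int N1..int N1}. coeff (Rp (2*N1) i) (nat (int N1 + k)) * poly (Pc N1 k) (complex_of_real x)) *
         (\<Sum>l\<in>{- int N2..int N2}. coeff (Rp (2*N2) j) (nat (int N2 + l)) * poly (Pc N2 l) (complex_of_real y)) *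
         (\<Sum>m\<in>{- int N3..int N3}. coeff (Rp (2*N3) h) (nat (int N3 + m)) * poly (Pc N3 m) (complex_of_real z))))"
      by (intro sum.cong refl arg_cong2[where f="(*)"]) (auto simp: Xpow)
    also have "\<dots> = (\<Sum>k\<in>{- int N1..int N1}. \<Sum>l\<in>{- int N2..int N2}. \<Sum>m\<in>{- int N3..int N3}.
      cc (k, l, m) * (poly (Pc N1 k) (complex_of_real x) * poly (Pc N2 l) (complex_of_real y) * poly (Pc N3 m) (complex_of_real z)))"
      unfolding cc_def prod.case by (rule swap6[where q="\<lambda>(i,j,h). complex_of_real (a (i, j, h))", simplified])
    also have "\<dots> = complex_of_real (W x y z) * Gt cc N1 N2 N3 (wq x) (wq y) (wq z)"
      unfolding W_def by (rule W_Gt[symmetric])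
    finally have "complex_of_real (p (x, y, z)) = complex_of_real (W x y z) * Gt cc N1 N2 N3 (wq x) (wq y) (wq z)" .
    from arg_cong[OF this, of Re] show ?thesis by simp
  qed
  define f where "f = (\<lambda>(a,b,c). Re (Gt cc N1 N2 N3 (cis a) (cis b) (cis c)))"
  have tp: "trig_poly N1 N2 N3 f" unfolding f_def by (rule trig_Re)
  have nn: "f q \<ge> 0" for q
  proof -
    obtain a b c where qe: "q = (a, b, c)" by (cases q) auto
    have "Re (Gt cc N1 N2 N3 (wq x) (wq y) (wq z)) \<ge> 0" for x y z
    proof -
      have "W x y z > 0" unfolding W_def by (rule wpos)
      moreover have "W x y z * Re (Gt cc N1 N2 N3 (wq x) (wq y) (wq z)) \<ge> 0" using key pnn by simp
      ultimately show ?thesis by (simp add: zero_le_mult_iff)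
    qed
    hence "Re (Gt cc N1 N2 N3 (cis a) (cis b) (cis c)) \<ge> 0"
      by (intro NN3[of "\<lambda>u v w. Re (Gt cc N1 N2 N3 u v w)", simplified] cont3_Gt)
    thus ?thesis by (simp add: f_def qe)
  qed
  have "calderon N1 N2 N3 f = p"
  proof
    fix q :: "real \<times> real \<times> real"
    obtain x y z where qe: "q = (x, y, z)" by (cases q) auto
    show "calderon N1 N2 N3 f q = p q"
      unfolding qe calderon_apply using key[of x y z] by (simp add: f_def cis_cal_angle W_def)
  qed
  thus ?thesis using tp nn by (auto simp: sigma_trig_def)
qed

lemma poly_eq_on_reals:
  fixes p q :: "complex poly"
  assumes "\<And>x::real. poly p (complex_of_real x) = poly q (complex_of_real x)"
  shows "p = q"
proof (rule ccontr)
  assume "p \<noteq> q"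
  hence "p - q \<noteq> 0" by simp
  hence fin: "finite {z. poly (p - q) z = 0}" by (rule poly_roots_finite)
  have "range complex_of_real \<subseteq> {z. poly (p - q) z = 0}" using assms by auto
  hence "finite (range complex_of_real)" using finite_subset fin by blast
  moreover have "inj complex_of_real" by (simp add: inj_on_def)
  ultimately have "finite (UNIV :: real set)" using finite_imageD by blast
  thus False by (metis infinite_UNIV_char_0)
qed

lemma U1:
  fixes c :: "nat \<Rightarrow> complex"
  assumes "\<And>x::real. (\<Sum>k\<le>D. c k * complex_of_real x ^ k) = 0" "k \<le> D"
  shows "c k = 0"
proof -
  define P where "P = (\<Sum>k\<le>D. monom (c k) k)"
  have "poly P (complex_of_real x) = poly 0 (complex_of_real x)" for x
    using assms(1)[of x] by (simp add: P_def poly_sum poly_monom)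
  hence "P = 0" by (rule poly_eq_on_reals)
  hence "coeff P k = 0" by simp
  moreover have "coeff P k = c k" using assms(2) by (simp add: P_def coeff_sum)
  ultimately show ?thesis by simp
qed

lemma U2:
  fixes c :: "nat \<Rightarrow> nat \<Rightarrow> complex"
  assumes "\<And>y z::real. (\<Sum>l\<le>D. \<Sum>m\<le>D. c l m * complex_of_real y ^ l * complex_of_real z ^ m) = 0"
    "l \<le> D" "m \<le> D"
  shows "c l m = 0"
proof -
  have "(\<Sum>m\<le>D. c l m * complex_of_real z ^ m) = 0" for z
  proof (rule U1[where c="\<lambda>l. \<Sum>m\<le>D. c l m * complex_of_real z ^ m", OF _ assms(2)])
    fix y
    show "(\<Sum>l\<le>D. (\<Sum>m\<le>D. c l m * complex_of_real z ^ m) * complex_of_real y ^ l) = 0"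
      using assms(1)[of y z] by (simp add: sum_distrib_right sum_distrib_left mult_ac)
  qed
  thus ?thesis by (rule U1[OF _ assms(3)])
qed

lemma degree_cnj: "degree (map_poly cnj p) = degree p"
  by (rule degree_map_poly) simp

lemma coeff_PP:
  fixes P :: "complex poly"
  assumes "degree P \<le> d"
  shows "coeff (P * map_poly cnj P) (2*d) = (if degree P = d then complex_of_real ((cmod (coeff P d))\<^sup>2) else 0)"
proof (cases "degree P = d")
  case True
  have "coeff (P * map_poly cnj P) (degree P + degree (map_poly cnj P)) = coeff P (degree P) * coeff (map_poly cnj P) (degree (map_poly cnj P))"
    by (rule coeff_mult_degree_sum)
  thus ?thesis using True by (simp del: of_real_power add: degree_cnj coeff_map_poly complex_norm_square mult_2)
next
  case False
  hence "degree (P * map_poly cnj P) < 2*d"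
    using degree_mult_le[of P "map_poly cnj P"] assms by (simp add: degree_cnj)
  thus ?thesis using False by (simp add: coeff_eq_0)
qed

lemma DR1:
  fixes P :: "nat \<Rightarrow> complex poly" and A :: "complex poly"
  assumes dA: "degree A \<le> 2*M"
    and e: "\<And>x::real. poly A (complex_of_real x) = complex_of_real (\<Sum>j<r. (cmod (poly (P j) (complex_of_real x)))\<^sup>2)"
    and j: "j < r"
  shows "degree (P j) \<le> M"
proof (rule ccontr)
  assume "\<not> degree (P j) \<le> M"
  define d where "d = Max ((\<lambda>j. degree (P j)) ` {..<r})"
  have dj: "degree (P j) \<le> d" unfolding d_def using j by (intro Max_ge) auto
  hence dM: "d > M" using \<open>\<not> degree (P j) \<le> M\<close> by simp
  have "d \<in> (\<lambda>j. degree (P j)) ` {..<r}" unfolding d_def using j by (intro Max_in) auto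
  then obtain j0 where j0: "j0 < r" "degree (P j0) = d" by auto
  have dall: "degree (P i) \<le> d" if "i < r" for i unfolding d_def using that by (intro Max_ge) auto
  define Q where "Q = (\<Sum>i<r. P i * map_poly cnj (P i))"
  have "poly Q (complex_of_real x) = poly A (complex_of_real x)" for x
  proof -
    have "poly (P i * map_poly cnj (P i)) (complex_of_real x) = complex_of_real ((cmod (poly (P i) (complex_of_real x)))\<^sup>2)" for i
      by (simp del: of_real_power add: complex_norm_square[symmetric])
    thus ?thesis unfolding Q_def e by (simp add: poly_sum)
  qed
  hence QA: "Q = A" by (rule poly_eq_on_reals)
  have "coeff A (2*d) = 0" using dA dM by (intro coeff_eq_0) simp
  hence "coeff Q (2*d) = 0" using QA by simp
  moreover have "coeff Q (2*d) = complex_of_real (\<Sum>i<r. if degree (P i) = d then (cmod (coeff (P i) d))\<^sup>2 else 0)"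
    unfolding Q_def coeff_sum by (simp add: coeff_PP dall if_distrib cong: if_cong)
  ultimately have z: "(\<Sum>i<r. if degree (P i) = d then (cmod (coeff (P i) d))\<^sup>2 else 0) = 0"
    by (metis of_real_eq_0_iff)
  have "(if degree (P j0) = d then (cmod (coeff (P j0) d))\<^sup>2 else 0) = 0"
    using z j0(1) by (subst (asm) sum_nonneg_eq_0_iff) auto
  hence "coeff (P j0) d = 0" using j0(2) by simp
  moreover have "P j0 \<noteq> 0" using j0(2) dM by auto
  ultimately show False using j0(2) by (metis leading_coeff_0_iff)
qed

lemma DR_x:
  fixes Fs :: "nat \<Rightarrow> nat \<times> nat \<times> nat \<Rightarrow> complex" and a :: "nat \<times> nat \<times> nat \<Rightarrow> real" and p :: fn3
  assumes hp: "\<And>x y z. p (x,y,z) = (\<Sum>j<r. (cmod (\<Sum>k\<le>D. \<Sum>l\<le>D. \<Sum>m\<le>D. Fs j (k,l,m) * complex_of_real x ^ k * complex_of_real y ^ l * complex_of_real z ^ m))\<^sup>2)"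
    and ha: "\<And>x y z. p (x,y,z) = (\<Sum>k\<le>2*M. \<Sum>l\<le>B2. \<Sum>m\<le>B3. a (k,l,m) * x ^ k * y ^ l * z ^ m)"
    and j: "j < r" and k: "M < k" "k \<le> D" and lm: "l \<le> D" "m \<le> D"
  shows "Fs j (k,l,m) = 0"
proof -
  have "(\<Sum>l\<le>D. \<Sum>m\<le>D. Fs j (k,l,m) * complex_of_real y ^ l * complex_of_real z ^ m) = 0" for y z
  proof -
    define P where "P = (\<lambda>j. \<Sum>k\<le>D. monom (\<Sum>l\<le>D. \<Sum>m\<le>D. Fs j (k,l,m) * complex_of_real y ^ l * complex_of_real z ^ m) k)"
    define A where "A = (\<Sum>k\<le>2*M. monom (complex_of_real (\<Sum>l\<le>B2. \<Sum>m\<le>B3. a (k,l,m) * y ^ l * z ^ m)) k)"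
    have dA: "degree A \<le> 2*M" unfolding A_def
      by (rule degree_sum_le) (auto intro: order_trans[OF degree_monom_le])
    have pP: "poly (P j) (complex_of_real x) = (\<Sum>k\<le>D. \<Sum>l\<le>D. \<Sum>m\<le>D. Fs j (k,l,m) * complex_of_real x ^ k * complex_of_real y ^ l * complex_of_real z ^ m)" for j x
      unfolding P_def by (simp add: poly_sum poly_monom sum_distrib_right sum_distrib_left mult_ac)
    have pA: "poly A (complex_of_real x) = complex_of_real (p (x,y,z))" for x
      unfolding A_def ha by (simp add: poly_sum poly_monom sum_distrib_right sum_distrib_left mult_ac)
    have e: "poly A (complex_of_real x) = complex_of_real (\<Sum>j<r. (cmod (poly (P j) (complex_of_real x)))\<^sup>2)" for x
      unfolding pA pP hp ..
    have "degree (P j) \<le> M" by (rule DR1[OF dA e j])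
    hence "coeff (P j) k = 0" using k by (intro coeff_eq_0) simp
    moreover have "coeff (P j) k = (\<Sum>l\<le>D. \<Sum>m\<le>D. Fs j (k,l,m) * complex_of_real y ^ l * complex_of_real z ^ m)"
      unfolding P_def coeff_sum using k by simp
    ultimately show ?thesis by simp
  qed
  thus ?thesis by (rule U2[where c="\<lambda>l m. Fs j (k,l,m)", OF _ lm])
qed

lemma sw12: "(\<Sum>k\<in>K. \<Sum>l\<in>L. \<Sum>m\<in>M. g k l m) = (\<Sum>l\<in>L. \<Sum>k\<in>K. \<Sum>m\<in>M. g k l m)"
  by (rule sum.swap)

lemma sw_last: "(\<Sum>k\<in>K. \<Sum>l\<in>L. \<Sum>m\<in>M. g k l m) = (\<Sum>m\<in>M. \<Sum>k\<in>K. \<Sum>l\<in>L. g k l m)"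
proof -
  have "(\<Sum>k\<in>K. \<Sum>l\<in>L. \<Sum>m\<in>M. g k l m) = (\<Sum>k\<in>K. \<Sum>m\<in>M. \<Sum>l\<in>L. g k l m)"
    by (rule sum.cong[OF refl]) (rule sum.swap)
  also have "\<dots> = (\<Sum>m\<in>M. \<Sum>k\<in>K. \<Sum>l\<in>L. g k l m)" by (rule sum.swap)
  finally show ?thesis .
qed

lemma DR_all:
  fixes Fs :: "nat \<Rightarrow> nat \<times> nat \<times> nat \<Rightarrow> complex" and a :: "nat \<times> nat \<times> nat \<Rightarrow> real" and p :: fn3
  assumes hp: "\<And>x y z. p (x,y,z) = (\<Sum>j<r. (cmod (\<Sum>k\<le>D. \<Sum>l\<le>D. \<Sum>m\<le>D. Fs j (k,l,m) * complex_of_real x ^ k * complex_of_real y ^ l * complex_of_real z ^ m))\<^sup>2)"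
    and ha: "\<And>x y z. p (x,y,z) = (\<Sum>k\<le>2*N1. \<Sum>l\<le>2*N2. \<Sum>m\<le>2*N3. a (k,l,m) * x ^ k * y ^ l * z ^ m)"
    and j: "j < r" and kd: "k \<le> D" "l \<le> D" "m \<le> D" and big: "N1 < k \<or> N2 < l \<or> N3 < m"
  shows "Fs j (k,l,m) = 0"
proof -
  consider "N1 < k" | "N2 < l" | "N3 < m" using big by blast
  thus ?thesis
  proof cases
    case 1
    show ?thesis by (rule DR_x[OF hp ha j 1 kd])
  next
    case 2
    define p' where "p' = (\<lambda>(y::real, x::real, z::real). p (x, y, z))"
    have hp': "p' (y,x,z) = (\<Sum>j<r. (cmod (\<Sum>l\<le>D. \<Sum>k\<le>D. \<Sum>m\<le>D. (\<lambda>j (l,k,m). Fs j (k,l,m)) j (l,k,m) * complex_of_real y ^ l * complex_of_real x ^ k * complex_of_real z ^ m))\<^sup>2)" for x y z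
    proof -
      have "(\<Sum>k\<le>D. \<Sum>l\<le>D. \<Sum>m\<le>D. Fs j (k,l,m) * complex_of_real x ^ k * complex_of_real y ^ l * complex_of_real z ^ m)
        = (\<Sum>l\<le>D. \<Sum>k\<le>D. \<Sum>m\<le>D. (\<lambda>j (l,k,m). Fs j (k,l,m)) j (l,k,m) * complex_of_real y ^ l * complex_of_real x ^ k * complex_of_real z ^ m)" for j
        by (rule trans[OF sw12]) (simp add: mult_ac)
      thus ?thesis unfolding p'_def by (simp only: prod.case hp)
    qed
    have ha': "p' (y,x,z) = (\<Sum>l\<le>2*N2. \<Sum>k\<le>2*N1. \<Sum>m\<le>2*N3. (\<lambda>(l,k,m). a (k,l,m)) (l,k,m) * y ^ l * x ^ k * z ^ m)" for x y z
      unfolding p'_def prod.case ha by (rule trans[OF sw12]) (simp add: mult_ac)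
    have "(\<lambda>j (l,k,m). Fs j (k,l,m)) j (l,k,m) = 0"
      by (rule DR_x[where p=p', OF hp' ha' j 2 kd(2,1,3)])
    thus ?thesis by simp
  next
    case 3
    define p' where "p' = (\<lambda>(z::real, x::real, y::real). p (x, y, z))"
    have hp': "p' (z,x,y) = (\<Sum>j<r. (cmod (\<Sum>m\<le>D. \<Sum>k\<le>D. \<Sum>l\<le>D. (\<lambda>j (m,k,l). Fs j (k,l,m)) j (m,k,l) * complex_of_real z ^ m * complex_of_real x ^ k * complex_of_real y ^ l))\<^sup>2)" for x y z
    proof -
      have "(\<Sum>k\<le>D. \<Sum>l\<le>D. \<Sum>m\<le>D. Fs j (k,l,m) * complex_of_real x ^ k * complex_of_real y ^ l * complex_of_real z ^ m)
        = (\<Sum>m\<le>D. \<Sum>k\<le>D. \<Sum>l\<le>D. (\<lambda>j (m,k,l). Fs j (k,l,m)) j (m,k,l) * complex_of_real z ^ m * complex_of_real x ^ k * complex_of_real y ^ l)" for j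
        by (rule trans[OF sw_last]) (simp add: mult_ac)
      thus ?thesis unfolding p'_def by (simp only: prod.case hp)
    qed
    have ha': "p' (z,x,y) = (\<Sum>m\<le>2*N3. \<Sum>k\<le>2*N1. \<Sum>l\<le>2*N2. (\<lambda>(m,k,l). a (k,l,m)) (m,k,l) * z ^ m * x ^ k * y ^ l)" for x y z
      unfolding p'_def prod.case ha by (rule trans[OF sw_last]) (simp add: mult_ac)
    have "(\<lambda>j (m,k,l). Fs j (k,l,m)) j (m,k,l) = 0"
      by (rule DR_x[where p=p', OF hp' ha' j 3 kd(3,1,2)])
    thus ?thesis by simp
  qed
qed

lemma cmod_pow_sq: "(cmod (complex_of_real x - \<i>) ^ N)\<^sup>2 = (x\<^sup>2 + 1) ^ N"
  by (metis cmod_xmi2 power_mult mult.commute)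

lemma cmodV:
  "(cmod ((complex_of_real x - \<i>) ^ N1 * (complex_of_real y - \<i>) ^ N2 * (complex_of_real z - \<i>) ^ N3 * t))\<^sup>2
   = ((x\<^sup>2 + 1) ^ N1 * (y\<^sup>2 + 1) ^ N2 * (z\<^sup>2 + 1) ^ N3) * (cmod t)\<^sup>2"
  by (simp only: norm_mult norm_power power_mult_distrib cmod_pow_sq)

lemma poly_Pn_sum:
  assumes "k \<le> N" "N \<le> D"
  shows "poly (Pn N k) z = (\<Sum>i\<le>D. coeff (Pn N k) i * z ^ i)"
  by (rule poly_sum_bound) (use degree_Pn[OF assms(1)] assms(2) in linarith)

lemma Q_fwd:
  assumes "f \<in> Q_trig N1 N2 N3"
  shows "calderon N1 N2 N3 f \<in> Q_P (2*N1) (2*N2) (2*N3)"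
proof -
  have fs: "f \<in> sigma_trig N1 N2 N3" using assms by (simp add: Q_trig_def)
  obtain r :: nat and qs :: "nat \<Rightarrow> nat \<times> nat \<times> nat \<Rightarrow> complex" where hf: "\<And>a b c. f (a, b, c) = (\<Sum>j<r. (cmod (\<Sum>k\<le>N1. \<Sum>l\<le>N2. \<Sum>m\<le>N3.
          qs j (k, l, m) * exp (\<i> * complex_of_real (real k * a + real l * b + real m * c))))\<^sup>2)"
    using assms unfolding Q_trig_def mem_Collect_eq by blast
  define D where "D = N1 + N2 + N3"
  define Fs where "Fs = (\<lambda>j (i,i',h). \<Sum>k\<le>N1. \<Sum>l\<le>N2. \<Sum>m\<le>N3.
      qs j (k, l, m) * coeff (Pn N1 k) i * coeff (Pn N2 l) i' * coeff (Pn N3 m) h)"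
  have main: "calderon N1 N2 N3 f (x, y, z) = (\<Sum>j<r. (cmod (\<Sum>k\<le>D. \<Sum>l\<le>D. \<Sum>m\<le>D.
          Fs j (k, l, m) * complex_of_real x ^ k * complex_of_real y ^ l * complex_of_real z ^ m))\<^sup>2)" for x y z
  proof -
    define X where "X = complex_of_real x"
    define Y where "Y = complex_of_real y"
    define Z where "Z = complex_of_real z"
    have T: "(\<Sum>k\<le>N1. \<Sum>l\<le>N2. \<Sum>m\<le>N3. qs j (k, l, m) *
          exp (\<i> * complex_of_real (real k * cal_angle x + real l * cal_angle y + real m * cal_angle z)))
        = (\<Sum>k\<le>N1. \<Sum>l\<le>N2. \<Sum>m\<le>N3. qs j (k, l, m) * (wq x ^ k * wq y ^ l * wq z ^ m))" for j
      by (simp only: exp_nat3 cis_cal_angle)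
    have V: "(X - \<i>) ^ N1 * (Y - \<i>) ^ N2 * (Z - \<i>) ^ N3 *
          (\<Sum>k\<le>N1. \<Sum>l\<le>N2. \<Sum>m\<le>N3. qs j (k, l, m) * (wq x ^ k * wq y ^ l * wq z ^ m))
        = (\<Sum>k\<le>D. \<Sum>l\<le>D. \<Sum>m\<le>D. Fs j (k, l, m) * X ^ k * Y ^ l * Z ^ m)" for j
    proof -
      have "(X - \<i>) ^ N1 * (Y - \<i>) ^ N2 * (Z - \<i>) ^ N3 *
          (\<Sum>k\<le>N1. \<Sum>l\<le>N2. \<Sum>m\<le>N3. qs j (k, l, m) * (wq x ^ k * wq y ^ l * wq z ^ m))
        = (\<Sum>k\<le>N1. \<Sum>l\<le>N2. \<Sum>m\<le>N3. qs j (k, l, m) * (((X - \<i>) ^ N1 * wq x ^ k) *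
             ((Y - \<i>) ^ N2 * wq y ^ l) * ((Z - \<i>) ^ N3 * wq z ^ m)))"
        by (simp add: sum_distrib_left mult_ac)
      also have "\<dots> = (\<Sum>k\<le>N1. \<Sum>l\<le>N2. \<Sum>m\<le>N3. qs j (k, l, m) *
          ((\<Sum>i\<le>D. coeff (Pn N1 k) i * X ^ i) * (\<Sum>i\<le>D. coeff (Pn N2 l) i * Y ^ i) * (\<Sum>i\<le>D. coeff (Pn N3 m) i * Z ^ i)))"
        by (intro sum.cong refl arg_cong2[where f="(*)"])
           (auto simp: X_def Y_def Z_def cal_nat poly_Pn_sum[symmetric] poly_Pn D_def)
      also have "\<dots> = (\<Sum>i\<le>D. \<Sum>i'\<le>D. \<Sum>h\<le>D. (\<Sum>k\<le>N1. \<Sum>l\<le>N2. \<Sum>m\<le>N3.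
          qs j (k, l, m) * coeff (Pn N1 k) i * coeff (Pn N2 l) i' * coeff (Pn N3 m) h) * (X ^ i * Y ^ i' * Z ^ h))"
        by (rule swap6)
      also have "\<dots> = (\<Sum>k\<le>D. \<Sum>l\<le>D. \<Sum>m\<le>D. Fs j (k, l, m) * X ^ k * Y ^ l * Z ^ m)"
        by (simp add: Fs_def mult.assoc)
      finally show ?thesis .
    qed
    have "calderon N1 N2 N3 f (x, y, z) = (\<Sum>j<r. ((x\<^sup>2 + 1) ^ N1 * (y\<^sup>2 + 1) ^ N2 * (z\<^sup>2 + 1) ^ N3) *
        (cmod (\<Sum>k\<le>N1. \<Sum>l\<le>N2. \<Sum>m\<le>N3. qs j (k, l, m) * (wq x ^ k * wq y ^ l * wq z ^ m)))\<^sup>2)"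
      unfolding calderon_apply hf T by (simp add: sum_distrib_left)
    also have "\<dots> = (\<Sum>j<r. (cmod ((X - \<i>) ^ N1 * (Y - \<i>) ^ N2 * (Z - \<i>) ^ N3 *
        (\<Sum>k\<le>N1. \<Sum>l\<le>N2. \<Sum>m\<le>N3. qs j (k, l, m) * (wq x ^ k * wq y ^ l * wq z ^ m))))\<^sup>2)"
      unfolding X_def Y_def Z_def cmodV ..
    also have "\<dots> = (\<Sum>j<r. (cmod (\<Sum>k\<le>D. \<Sum>l\<le>D. \<Sum>m\<le>D. Fs j (k, l, m) * X ^ k * Y ^ l * Z ^ m))\<^sup>2)"
      unfolding V ..
    finally show ?thesis unfolding X_def Y_def Z_def .
  qed
  show ?thesis unfolding Q_P_def using sigma_fwd[OF fs] main by blast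
qed

lemma sum_restrict3:
  fixes g :: "nat \<Rightarrow> nat \<Rightarrow> nat \<Rightarrow> 'a::comm_monoid_add"
  assumes z: "\<And>k l m. k \<le> D \<Longrightarrow> l \<le> D \<Longrightarrow> m \<le> D \<Longrightarrow> N1 < k \<or> N2 < l \<or> N3 < m \<Longrightarrow> g k l m = 0"
  shows "(\<Sum>k\<le>D. \<Sum>l\<le>D. \<Sum>m\<le>D. g k l m) = (\<Sum>k\<le>N1. \<Sum>l\<le>N2. \<Sum>m\<le>N3. if k \<le> D \<and> l \<le> D \<and> m \<le> D then g k l m else 0)"
proof -
  define S where "S = {..D} \<times> {..D} \<times> {..D}"
  define B where "B = {..N1} \<times> {..N2} \<times> {..N3}"
  have fS: "finite S" and fB: "finite B" by (simp_all add: S_def B_def)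
  have "(\<Sum>k\<le>D. \<Sum>l\<le>D. \<Sum>m\<le>D. g k l m) = (\<Sum>(k,l,m)\<in>S. g k l m)"
    unfolding S_def by (rule sum3_prod)
  also have "\<dots> = (\<Sum>(k,l,m)\<in>B \<inter> S. g k l m)"
  proof (rule sum.mono_neutral_right[OF fS])
    show "B \<inter> S \<subseteq> S" by blast
    show "\<forall>i\<in>S - B \<inter> S. (case i of (k, l, m) \<Rightarrow> g k l m) = 0"
    proof
      fix i assume i: "i \<in> S - B \<inter> S"
      obtain k l m where kl: "i = (k, l, m)" by (cases i) auto
      have "k \<le> D" "l \<le> D" "m \<le> D" "N1 < k \<or> N2 < l \<or> N3 < m"
        using i kl by (auto simp: S_def B_def)
      thus "(case i of (k, l, m) \<Rightarrow> g k l m) = 0" using z kl by simp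
    qed
  qed
  also have "\<dots> = (\<Sum>x\<in>B. if x \<in> S then (case x of (k,l,m) \<Rightarrow> g k l m) else 0)"
    by (rule sum.inter_restrict[OF fB])
  also have "\<dots> = (\<Sum>(k,l,m)\<in>B. if k \<le> D \<and> l \<le> D \<and> m \<le> D then g k l m else 0)"
    by (rule sum.cong[OF refl]) (auto simp: S_def split: if_splits)
  also have "\<dots> = (\<Sum>k\<le>N1. \<Sum>l\<le>N2. \<Sum>m\<le>N3. if k \<le> D \<and> l \<le> D \<and> m \<le> D then g k l m else 0)"
    unfolding B_def by (rule sum3_prod[symmetric])
  finally show ?thesis .
qed

lemma Xpow_n:
  assumes "k \<le> N"
  shows "complex_of_real x ^ k = (\<Sum>a\<le>N. coeff (Rp N k) a * poly (Pn N a) (complex_of_real x))"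
  unfolding Rp_expand[OF xmi_nz assms] by (simp add: poly_Pn mult.commute)

lemma Q_bwd:
  assumes pQ: "p \<in> Q_P (2*N1) (2*N2) (2*N3)"
  shows "\<exists>f \<in> Q_trig N1 N2 N3. calderon N1 N2 N3 f = p"
proof -
  have ps: "p \<in> sigma_P (2*N1) (2*N2) (2*N3)" using pQ by (simp add: Q_P_def)
  obtain f where fs: "f \<in> sigma_trig N1 N2 N3" and cf: "calderon N1 N2 N3 f = p"
    using sigma_bwd[OF ps] by blast
  obtain r :: nat and D :: nat and Fs :: "nat \<Rightarrow> nat \<times> nat \<times> nat \<Rightarrow> complex" where
    hp: "\<And>x y z. p (x,y,z) = (\<Sum>j<r. (cmod (\<Sum>k\<le>D. \<Sum>l\<le>D. \<Sum>m\<le>D. Fs j (k,l,m) * complex_of_real x ^ k * complex_of_real y ^ l * complex_of_real z ^ m))\<^sup>2)"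
    using pQ unfolding Q_P_def mem_Collect_eq by blast
  obtain ac :: "nat \<times> nat \<times> nat \<Rightarrow> real" where
    ha: "\<And>x y z. p (x,y,z) = (\<Sum>k\<le>2*N1. \<Sum>l\<le>2*N2. \<Sum>m\<le>2*N3. ac (k,l,m) * x ^ k * y ^ l * z ^ m)"
    using ps unfolding sigma_P_def real_poly3_def mem_Collect_eq by blast
  have Z: "Fs j (k,l,m) = 0" if "j < r" "k \<le> D" "l \<le> D" "m \<le> D" "N1 < k \<or> N2 < l \<or> N3 < m" for j k l m
    by (rule DR_all[OF hp ha that])
  define Fs' where "Fs' = (\<lambda>j (k,l,m). if k \<le> D \<and> l \<le> D \<and> m \<le> D then Fs j (k,l,m) else 0)"
  define qq where "qq = (\<lambda>j (a,b,c). \<Sum>k\<le>N1. \<Sum>l\<le>N2. \<Sum>m\<le>N3.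
      Fs' j (k,l,m) * coeff (Rp N1 k) a * coeff (Rp N2 l) b * coeff (Rp N3 m) c)"
  define Tq where "Tq = (\<lambda>j u v w. \<Sum>a\<le>N1. \<Sum>b\<le>N2. \<Sum>c\<le>N3. qq j (a,b,c) * (u ^ a * v ^ b * w ^ c))"
  have FV: "(\<Sum>k\<le>D. \<Sum>l\<le>D. \<Sum>m\<le>D. Fs j (k,l,m) * complex_of_real x ^ k * complex_of_real y ^ l * complex_of_real z ^ m)
     = (complex_of_real x - \<i>) ^ N1 * (complex_of_real y - \<i>) ^ N2 * (complex_of_real z - \<i>) ^ N3 * Tq j (wq x) (wq y) (wq z)"
    if j: "j < r" for j x y z
  proof -
    define X where "X = complex_of_real x"
    define Y where "Y = complex_of_real y"
    define Zc where "Zc = complex_of_real z"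
    have "(\<Sum>k\<le>D. \<Sum>l\<le>D. \<Sum>m\<le>D. Fs j (k,l,m) * X ^ k * Y ^ l * Zc ^ m)
        = (\<Sum>k\<le>N1. \<Sum>l\<le>N2. \<Sum>m\<le>N3. if k \<le> D \<and> l \<le> D \<and> m \<le> D then Fs j (k,l,m) * X ^ k * Y ^ l * Zc ^ m else 0)"
      by (rule sum_restrict3) (simp add: Z[OF j])
    also have "\<dots> = (\<Sum>k\<le>N1. \<Sum>l\<le>N2. \<Sum>m\<le>N3. Fs' j (k,l,m) * (X ^ k * Y ^ l * Zc ^ m))"
      by (intro sum.cong refl) (simp add: Fs'_def mult.assoc)
    also have "\<dots> = (\<Sum>k\<le>N1. \<Sum>l\<le>N2. \<Sum>m\<le>N3. Fs' j (k,l,m) *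
        ((\<Sum>a\<le>N1. coeff (Rp N1 k) a * poly (Pn N1 a) X) * (\<Sum>a\<le>N2. coeff (Rp N2 l) a * poly (Pn N2 a) Y)
          * (\<Sum>a\<le>N3. coeff (Rp N3 m) a * poly (Pn N3 a) Zc)))"
      by (intro sum.cong refl arg_cong2[where f="(*)"]) (auto simp: X_def Y_def Zc_def Xpow_n)
    also have "\<dots> = (\<Sum>a\<le>N1. \<Sum>b\<le>N2. \<Sum>c\<le>N3. (\<Sum>k\<le>N1. \<Sum>l\<le>N2. \<Sum>m\<le>N3.
        Fs' j (k,l,m) * coeff (Rp N1 k) a * coeff (Rp N2 l) b * coeff (Rp N3 m) c) * (poly (Pn N1 a) X * poly (Pn N2 b) Y * poly (Pn N3 c) Zc))"
      by (rule swap6)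
    also have "\<dots> = (\<Sum>a\<le>N1. \<Sum>b\<le>N2. \<Sum>c\<le>N3. qq j (a,b,c) * (((X - \<i>) ^ N1 * wq x ^ a) * ((Y - \<i>) ^ N2 * wq y ^ b) * ((Zc - \<i>) ^ N3 * wq z ^ c)))"
      by (intro sum.cong refl) (simp add: qq_def X_def Y_def Zc_def cal_nat poly_Pn)
    also have "\<dots> = (X - \<i>) ^ N1 * (Y - \<i>) ^ N2 * (Zc - \<i>) ^ N3 * Tq j (wq x) (wq y) (wq z)"
      unfolding Tq_def by (simp add: sum_distrib_left mult_ac)
    finally show ?thesis unfolding X_def Y_def Zc_def .
  qed
  obtain q where q: "\<And>a b c. complex_of_real (f (a, b, c)) = Gt q N1 N2 N3 (cis a) (cis b) (cis c)"
    using trig_Gt[of N1 N2 N3 f] fs by (auto simp: sigma_trig_def)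
  define G2 where "G2 = (\<lambda>u v w. \<Sum>j<r. (cmod (Tq j u v w))\<^sup>2)"
  have eqw: "Re (Gt q N1 N2 N3 (wq x) (wq y) (wq z)) = G2 (wq x) (wq y) (wq z)" for x y z
  proof -
    define W where "W = (x\<^sup>2 + 1::real) ^ N1 * (y\<^sup>2 + 1) ^ N2 * (z\<^sup>2 + 1) ^ N3"
    have Wp: "W > 0" unfolding W_def by (rule wpos)
    have "W * Re (Gt q N1 N2 N3 (wq x) (wq y) (wq z)) = p (x, y, z)"
      using cf[symmetric] trig_Gt_real[OF q] by (simp add: calderon_apply W_def cis_cal_angle)
    also have "\<dots> = (\<Sum>j<r. W * (cmod (Tq j (wq x) (wq y) (wq z)))\<^sup>2)"
      unfolding hp W_def by (intro sum.cong refl) (simp add: FV cmodV)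
    also have "\<dots> = W * G2 (wq x) (wq y) (wq z)" by (simp add: G2_def sum_distrib_left)
    finally show ?thesis using Wp by simp
  qed
  have cG2: "cont3 G2" unfolding cont3_def G2_def Tq_def
    by (intro conjI allI continuous_intros)
  have eqc: "Re (Gt q N1 N2 N3 (cis a) (cis b) (cis c)) = G2 (cis a) (cis b) (cis c)" for a b c
    by (rule NN3_eq[OF cont3_Gt cG2 eqw])
  have "\<forall>a b c. f (a, b, c) = (\<Sum>j<r. (cmod (\<Sum>k\<le>N1. \<Sum>l\<le>N2. \<Sum>m\<le>N3.
          qq j (k, l, m) * exp (\<i> * complex_of_real (real k * a + real l * b + real m * c))))\<^sup>2)"
  proof (intro allI)
    fix a b c
    show "f (a, b, c) = (\<Sum>j<r. (cmod (\<Sum>k\<le>N1. \<Sum>l\<le>N2. \<Sum>m\<le>N3.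
          qq j (k, l, m) * exp (\<i> * complex_of_real (real k * a + real l * b + real m * c))))\<^sup>2)"
      unfolding trig_Gt_real[OF q] eqc G2_def Tq_def by (simp only: exp_nat3)
  qed
  hence "f \<in> Q_trig N1 N2 N3" using fs unfolding Q_trig_def by blast
  thus ?thesis using cf by blast
qed

lemma ball_img: "(\<forall>x\<in>f ` A. P x) \<longleftrightarrow> (\<forall>y\<in>A. P (f y))" by auto

lemma transfer:
  fixes C :: "fn3 \<Rightarrow> fn3" and T U :: "fn3 set"
  assumes lin: "\<And>f g s t. C (\<lambda>p. s * f p + t * g p) = (\<lambda>p. s * C f p + t * C g p)"
    and Tlin: "\<And>f g s t. f \<in> T \<Longrightarrow> g \<in> T \<Longrightarrow> (\<lambda>p. s * f p + t * g p) \<in> T"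
    and inj: "inj_on C T" and UT: "U \<subseteq> T"
  shows "C ` {f. extremal_point U f} = {g. extremal_point (C ` U) g}"
    and "(\<lambda>D. C ` D) ` {D. extremal_face U D} = {E. extremal_face (C ` U) E}"
proof -
  have add: "C (\<lambda>p. g p + h p) = (\<lambda>p. C g p + C h p)" for g h
    using lin[of 1 g 1 h] by simp
  have scal: "C (\<lambda>p. c * f p) = (\<lambda>p. c * C f p)" for c f
    using lin[of c f 0 f] by simp
  have cmb: "C (comb3 g h t) = comb3 (C g) (C h) t" for g h t
    unfolding comb3_def using lin[of "1 - t" g t h] by simp
  have Tadd: "(\<lambda>p. g p + h p) \<in> T" if "g \<in> T" "h \<in> T" for g h
    using Tlin[OF that, of 1 1] by simp
  have Tscal: "(\<lambda>p. c * f p) \<in> T" if "f \<in> T" for c f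
    using Tlin[OF that that, of c 0] by simp
  have Tcmb: "comb3 g h t \<in> T" if "g \<in> T" "h \<in> T" for g h t
    unfolding comb3_def using Tlin[OF that] by simp
  have mem: "C x \<in> C ` X \<longleftrightarrow> x \<in> X" if "x \<in> T" "X \<subseteq> T" for x X
    using inj that by (auto simp: inj_on_def)
  have Ceq: "C x = C y \<longleftrightarrow> x = y" if "x \<in> T" "y \<in> T" for x y
    using inj that by (auto simp: inj_on_def)
  have ep: "extremal_point (C ` U) (C f) \<longleftrightarrow> extremal_point U f" if f: "f \<in> U" for f
  proof -
    have fT: "f \<in> T" using f UT by auto
    have e1: "(C f = (\<lambda>p. C g p + C h p)) = (f = (\<lambda>p. g p + h p))" if "g \<in> U" "h \<in> U" for g h
      using Ceq[OF fT Tadd, of g h] that UT add[of g h] by auto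
    have e2: "(C g = (\<lambda>p. c * C f p)) = (g = (\<lambda>p. c * f p))" if "g \<in> U" for g c
      using Ceq[OF _ Tscal[OF fT], of g c] that UT scal[of c f] by auto
    have "extremal_point (C ` U) (C f) \<longleftrightarrow>
       (\<forall>g\<in>U. \<forall>h\<in>U. C f = (\<lambda>p. C g p + C h p) \<longrightarrow>
        (\<exists>c\<ge>0. C g = (\<lambda>p. c * C f p)) \<and> (\<exists>d\<ge>0. C h = (\<lambda>p. d * C f p)))"
      unfolding extremal_point_def ball_img using f by simp
    also have "\<dots> \<longleftrightarrow> (\<forall>g\<in>U. \<forall>h\<in>U. f = (\<lambda>p. g p + h p) \<longrightarrow>
        (\<exists>c\<ge>0. g = (\<lambda>p. c * f p)) \<and> (\<exists>d\<ge>0. h = (\<lambda>p. d * f p)))"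
      by (intro ball_cong refl) (simp only: e1 e2)
    also have "\<dots> \<longleftrightarrow> extremal_point U f" unfolding extremal_point_def using f by simp
    finally show ?thesis .
  qed
  show "C ` {f. extremal_point U f} = {g. extremal_point (C ` U) g}"
  proof
    show "C ` {f. extremal_point U f} \<subseteq> {g. extremal_point (C ` U) g}"
      using ep by (auto simp: extremal_point_def)
    show "{g. extremal_point (C ` U) g} \<subseteq> C ` {f. extremal_point U f}"
    proof
      fix g assume "g \<in> {g. extremal_point (C ` U) g}"
      hence g: "extremal_point (C ` U) g" by simp
      then obtain f where f: "f \<in> U" "g = C f" unfolding extremal_point_def by auto
      thus "g \<in> C ` {f. extremal_point U f}" using ep[OF f(1)] g by auto
    qed
  qed
  have ef: "extremal_face (C ` U) (C ` D) \<longleftrightarrow> extremal_face U D" if D: "D \<subseteq> U" for D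
  proof -
    have DT: "D \<subseteq> T" using D UT by auto
    have m1: "comb3 (C g) (C h) t \<in> C ` X \<longleftrightarrow> comb3 g h t \<in> X" if "g \<in> T" "h \<in> T" "X \<subseteq> T" for g h t X
      using mem[OF Tcmb[OF that(1,2)] that(3)] cmb by simp
    have A: "(\<forall>g\<in>C ` D. \<forall>h\<in>C ` D. \<forall>t\<in>{0..1}. comb3 g h t \<in> C ` D) \<longleftrightarrow>
             (\<forall>g\<in>D. \<forall>h\<in>D. \<forall>t\<in>{0..1}. comb3 g h t \<in> D)"
      unfolding ball_img
    proof (rule ball_cong[OF refl], rule ball_cong[OF refl])
      fix g h assume gh: "g \<in> D" "h \<in> D"
      show "(\<forall>t\<in>{0..1}. comb3 (C g) (C h) t \<in> C ` D) = (\<forall>t\<in>{0..1}. comb3 g h t \<in> D)"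
        using m1 gh DT by blast
    qed
    have B: "(\<forall>g\<in>C ` U. \<forall>h\<in>C ` U. (\<forall>s\<in>{0..1}. comb3 g h s \<in> C ` U) \<longrightarrow>
        (\<forall>t. 0 < t \<and> t < 1 \<and> comb3 g h t \<in> C ` D \<longrightarrow> (\<forall>s\<in>{0..1}. comb3 g h s \<in> C ` D)))
      \<longleftrightarrow> (\<forall>g\<in>U. \<forall>h\<in>U. (\<forall>s\<in>{0..1}. comb3 g h s \<in> U) \<longrightarrow>
        (\<forall>t. 0 < t \<and> t < 1 \<and> comb3 g h t \<in> D \<longrightarrow> (\<forall>s\<in>{0..1}. comb3 g h s \<in> D)))"
      unfolding ball_img
    proof (rule ball_cong[OF refl], rule ball_cong[OF refl])
      fix g h assume gh: "g \<in> U" "h \<in> U"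
      have r1: "comb3 (C g) (C h) s \<in> C ` U \<longleftrightarrow> comb3 g h s \<in> U" for s
        using m1 gh UT by blast
      have r2: "comb3 (C g) (C h) s \<in> C ` D \<longleftrightarrow> comb3 g h s \<in> D" for s
        using m1 gh UT DT by blast
      show "((\<forall>s\<in>{0..1}. comb3 (C g) (C h) s \<in> C ` U) \<longrightarrow>
          (\<forall>t. 0 < t \<and> t < 1 \<and> comb3 (C g) (C h) t \<in> C ` D \<longrightarrow> (\<forall>s\<in>{0..1}. comb3 (C g) (C h) s \<in> C ` D)))
        = ((\<forall>s\<in>{0..1}. comb3 g h s \<in> U) \<longrightarrow>
          (\<forall>t. 0 < t \<and> t < 1 \<and> comb3 g h t \<in> D \<longrightarrow> (\<forall>s\<in>{0..1}. comb3 g h s \<in> D)))"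
        by (simp only: r1 r2)
    qed
    have D': "C ` D \<subseteq> C ` U" using D by auto
    show ?thesis unfolding extremal_face_def using A B D D' by blast
  qed
  show "(\<lambda>D. C ` D) ` {D. extremal_face U D} = {E. extremal_face (C ` U) E}"
  proof
    show "(\<lambda>D. C ` D) ` {D. extremal_face U D} \<subseteq> {E. extremal_face (C ` U) E}"
    proof
      fix E assume "E \<in> (\<lambda>D. C ` D) ` {D. extremal_face U D}"
      then obtain D where D: "extremal_face U D" "E = C ` D" by auto
      have "D \<subseteq> U" using D(1) by (simp add: extremal_face_def)
      thus "E \<in> {E. extremal_face (C ` U) E}" using ef D by simp
    qed
    show "{E. extremal_face (C ` U) E} \<subseteq> (\<lambda>D. C ` D) ` {D. extremal_face U D}"
    proof
      fix E assume "E \<in> {E. extremal_face (C ` U) E}"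
      hence E: "extremal_face (C ` U) E" by simp
      define D where "D = {f \<in> U. C f \<in> E}"
      have DU: "D \<subseteq> U" by (auto simp: D_def)
      have "E \<subseteq> C ` U" using E by (simp add: extremal_face_def)
      hence ED: "E = C ` D" by (auto simp: D_def)
      show "E \<in> (\<lambda>D. C ` D) ` {D. extremal_face U D}"
        using ef[OF DU] E ED by auto
    qed
  qed
qed

lemma calderon_lin:
  "calderon N1 N2 N3 (\<lambda>p. s * f p + t * g p) = (\<lambda>p. s * calderon N1 N2 N3 f p + t * calderon N1 N2 N3 g p)"
  unfolding calderon_def by (auto simp: fun_eq_iff algebra_simps)

theorem corollary8:
  fixes N1 N2 N3 :: nat
  shows "calderon N1 N2 N3 ` {f. extremal_point (sigma_trig N1 N2 N3) f}
           = {g. extremal_point (sigma_P (2*N1) (2*N2) (2*N3)) g}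
    \<and> (\<lambda>D. calderon N1 N2 N3 ` D) ` {D. extremal_face (sigma_trig N1 N2 N3) D}
           = {E. extremal_face (sigma_P (2*N1) (2*N2) (2*N3)) E}
    \<and> calderon N1 N2 N3 ` {f. extremal_point (Q_trig N1 N2 N3) f}
           = {g. extremal_point (Q_P (2*N1) (2*N2) (2*N3)) g}
    \<and> (\<lambda>D. calderon N1 N2 N3 ` D) ` {D. extremal_face (Q_trig N1 N2 N3) D}
           = {E. extremal_face (Q_P (2*N1) (2*N2) (2*N3)) E}"
proof -
  define T where "T = {f. trig_poly N1 N2 N3 f}"
  have Tlin: "(\<lambda>p. s * f p + t * g p) \<in> T" if "f \<in> T" "g \<in> T" for f g s t
    using trig_lin that unfolding T_def by blast
  have inj: "inj_on (calderon N1 N2 N3) T"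
    unfolding inj_on_def T_def using trig_inj by blast
  have sT: "sigma_trig N1 N2 N3 \<subseteq> T" unfolding T_def sigma_trig_def by auto
  have qT: "Q_trig N1 N2 N3 \<subseteq> T" using sT unfolding Q_trig_def by auto
  have sI: "calderon N1 N2 N3 ` sigma_trig N1 N2 N3 = sigma_P (2*N1) (2*N2) (2*N3)"
    using sigma_fwd sigma_bwd by blast
  have qI: "calderon N1 N2 N3 ` Q_trig N1 N2 N3 = Q_P (2*N1) (2*N2) (2*N3)"
    using Q_fwd Q_bwd by blast
  note s = transfer[OF calderon_lin Tlin inj sT, unfolded sI]
  note q = transfer[OF calderon_lin Tlin inj qT, unfolded qI]
  show ?thesis by (intro conjI s q)
qed

end
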